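(* For $a,b,c\in(0,1]$, \[\min\{a,b\}=\min_{x,y\in\mathbb{R}_+}\ ax+by\quad\text{subject to}\quad x^2+y^2-2cxy=1.\]
   Context: $\mathbb{R}_+$ denotes the nonnegative reals. *)

theory Defs
  imports "HOL-Analysis.Analysis"
begin

end

theory Submission
  imports Defs
begin

theorem lemma3:
  fixes a b c :: real
  assumes "0 < a" "a \<le> 1" "0 < b" "b \<le> 1" "0 < c" "c \<le> 1"
  shows "(\<exists>x y. x \<ge> 0 \<and> y \<ge> 0 \<and> x\<^sup>2 + y\<^sup>2 - 2 * c * x * y = 1 \<and> a * x + b * y = min a b) \<and>
         (\<forall>x y. x \<ge> 0 \<and> y \<ge> 0 \<and> x\<^sup>2 + y\<^sup>2 - 2 * c * x * y = 1 \<longrightarrow> min a b \<le> a * x + b * y)"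
proof
  show "\<exists>x y. x \<ge> 0 \<and> y \<ge> 0 \<and> x\<^sup>2 + y\<^sup>2 - 2 * c * x * y = 1 \<and> a * x + b * y = min a b"
  proof (cases "a \<le> b")
    case True
    then show ?thesis by (intro exI[of _ 1] exI[of _ 0]) auto
  next
    case False
    then show ?thesis by (intro exI[of _ 0] exI[of _ 1]) auto
  qed
next
  show "\<forall>x y. x \<ge> 0 \<and> y \<ge> 0 \<and> x\<^sup>2 + y\<^sup>2 - 2 * c * x * y = 1 \<longrightarrow> min a b \<le> a * x + b * y"
  proof (intro allI impI)
    fix x y :: real
    assume h: "x \<ge> 0 \<and> y \<ge> 0 \<and> x\<^sup>2 + y\<^sup>2 - 2 * c * x * y = 1"
    have "2 * c * x * y \<ge> 0" "2 * x * y \<ge> 0" using h assms by simp_all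
    moreover have "(x + y)\<^sup>2 = x\<^sup>2 + y\<^sup>2 + 2 * x * y" by (simp add: power2_sum)
    ultimately have "1\<^sup>2 \<le> (x + y)\<^sup>2" using h unfolding power_one by linarith
    hence s: "1 \<le> x + y" by (rule power2_le_imp_le) (use h in simp)
    have "min a b * x \<le> a * x" "min a b * y \<le> b * y" using h
      by (simp_all add: mult_right_mono)
    moreover have "min a b \<le> min a b * (x + y)"
      using s assms by (simp add: mult_le_cancel_left1)
    ultimately show "min a b \<le> a * x + b * y" by (simp add: algebra_simps)
  qed
qed

end
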